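(* In the truncated sparse linear regression model of the context, assume (A1), (A4) and (RE). There exists $\kappa\ge\Omega(\alpha^4\beta)$ (absolute implied constant) such that for every $\vec{\Omega}\in\mathbb{R}^d$ for which $\vec{\Delta}=\vec{\Omega}-\vec{\Omega}^*$ satisfies (i) $\|\vec{\Delta}\|_2\le\frac{1}{C\sqrt k}$ and (ii) $\|\vec{\Delta}_{\overline{K}}\|_1\le3\|\vec{\Delta}_K\|_1$, it holds that \[ \vec{\Delta}^\top\nabla^2l_n(\vec{\Omega})\vec{\Delta}\ge\kappa\|\vec{\Delta}\|_2^2 . \]
   Context: $S\subseteq\mathbb{R}$ measurable with indicator $S(\cdot)$. Fixed row vectors $\vec{x}^{(1)},\dots,\vec{x}^{(n)}\in\mathbb{R}^d$ are the rows of $\vec{X}\in\mathbb{R}^{n\times d}$. $\vec{\Omega}^*\in\mathbb{R}^d$ has support $K$, $|K|=k$, $\overline{K}=[d]\setminus K$; $\vec{\Delta}_K,\vec{\Delta}_{\overline{K}}$ are restrictions. Responses $y^{(i)}\sim\mathcal{N}(\vec{x}^{(i)}\vec{\Omega}^*,1)$ conditioned on $S$. $l_n(\vec{\Omega})=\frac1n\sum_{i=1}^n\left(\frac12{y^{(i)}}^2-y^{(i)}\vec{x}^{(i)}\vec{\Omega}+\log\int\exp\left(-\frac12z^2+z\,\vec{x}^{(i)}\vec{\Omega}\right)S(z)dz\right)$. $\alpha(\vec{\Omega},\vec{x})=\Pr_{y\sim\mathcal{N}(\vec{x}\vec{\Omega},1)}[y\in S]$. (A1): $\alpha(\vec{\Omega}^*,\vec{x}^{(i)})\ge\alpha>0$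 for all $i$; (A4): $\max_{i,j}|X_{ij}|\le C$; (RE): there is $\beta>0$ with $\frac1n\|\vec{X}\vec{\Delta}\|_2^2\ge\beta\|\vec{\Delta}\|_2^2$ whenever $\|\vec{\Delta}_{\overline{K}}\|_1\le3\|\vec{\Delta}_K\|_1$. *)

theory Defs
  imports "HOL-Probability.Probability"
begin

text \<open>Vectors in R^d are represented as functions nat => real, only indices j < d matter.
  The design matrix X is represented as X i j (row i < n, column j < d).\<close>

definition row_dot :: "nat \<Rightarrow> (nat \<Rightarrow> nat \<Rightarrow> real) \<Rightarrow> nat \<Rightarrow> (nat \<Rightarrow> real) \<Rightarrow> real" where
  "row_dot d X i w = (\<Sum>j<d. X i j * w j)"

definition l2norm :: "nat \<Rightarrow> (nat \<Rightarrow> real) \<Rightarrow> real" where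
  "l2norm d v = sqrt (\<Sum>j<d. (v j)\<^sup>2)"

definition l1norm_on :: "nat set \<Rightarrow> (nat \<Rightarrow> real) \<Rightarrow> real" where
  "l1norm_on A v = (\<Sum>j\<in>A. \<bar>v j\<bar>)"

text \<open>Negative log-likelihood l_n of the truncated linear regression model.\<close>
definition trunc_loss ::
  "real set \<Rightarrow> nat \<Rightarrow> nat \<Rightarrow> (nat \<Rightarrow> nat \<Rightarrow> real) \<Rightarrow> (nat \<Rightarrow> real) \<Rightarrow> (nat \<Rightarrow> real) \<Rightarrow> real" where
  "trunc_loss S n d X y \<Omega> =
     (1 / real n) * (\<Sum>i<n. (1/2) * (y i)\<^sup>2 - y i * row_dot d X i \<Omega>
        + ln (LINT z|lborel. exp (-(1/2) * z\<^sup>2 + z * row_dot d X i \<Omega>) * indicator S z))"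

text \<open>Quadratic form of the Hessian: Delta^T (Hessian of f at Omega) Delta,
  i.e. the second derivative of t |-> f (Omega + t Delta) at t = 0.\<close>
definition hess_quad :: "((nat \<Rightarrow> real) \<Rightarrow> real) \<Rightarrow> (nat \<Rightarrow> real) \<Rightarrow> (nat \<Rightarrow> real) \<Rightarrow> real" where
  "hess_quad f \<Omega> \<Delta> = deriv (deriv (\<lambda>t. f (\<lambda>j. \<Omega> j + t * \<Delta> j))) 0"

definition surv_mass :: "real set \<Rightarrow> real \<Rightarrow> real" where
  "surv_mass S \<mu> = measure (density lborel (normal_density \<mu> 1)) S"

definition RE_cond :: "nat \<Rightarrow> nat \<Rightarrow> (nat \<Rightarrow> nat \<Rightarrow> real) \<Rightarrow> nat set \<Rightarrow> real \<Rightarrow> bool" where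
  "RE_cond n d X K \<beta> \<longleftrightarrow>
     (\<forall>\<Delta>. l1norm_on ({..<d} - K) \<Delta> \<le> 3 * l1norm_on K \<Delta> \<longrightarrow>
        (1 / real n) * (\<Sum>i<n. (row_dot d X i \<Delta>)\<^sup>2) \<ge> \<beta> * (l2norm d \<Delta>)\<^sup>2)"

end

theory Submission imports Defs begin

definition gw :: "real \<Rightarrow> real \<Rightarrow> real" where
  "gw m z = exp (-(1/2) * z\<^sup>2 + z * m)"

lemma gw_normal: "gw a z = sqrt (2*pi) * exp (a\<^sup>2/2) * normal_density a 1 z"
proof -
  have "exp (a\<^sup>2/2) * exp (-(z - a)\<^sup>2 / 2) = gw a z"
    unfolding gw_def exp_add[symmetric] by (rule arg_cong[where f=exp]) (simp add: power2_eq_square field_simps)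
  then show ?thesis unfolding normal_density_def by (simp add: field_simps)
qed

lemma gw_pos: "gw a z > 0" by (simp add: gw_def)

lemma integrable_gw: "integrable lborel (gw a)"
  unfolding gw_normal by (intro integrable_mult_right) simp

lemma integrable_gw_exp_abs:
  "integrable lborel (\<lambda>z. exp (b * \<bar>z\<bar>) * gw a z)"
proof (rule Bochner_Integration.integrable_bound[OF Bochner_Integration.integrable_add[OF integrable_gw[of "a+b"] integrable_gw[of "a-b"]]])
  show "(\<lambda>z. exp (b * \<bar>z\<bar>) * gw a z) \<in> borel_measurable lborel" unfolding gw_def by measurable
  show "AE z in lborel. norm (exp (b * \<bar>z\<bar>) * gw a z) \<le> norm (gw (a + b) z + gw (a - b) z)"
  proof (intro AE_I2)
    fix z :: real
    have "exp (b * \<bar>z\<bar>) * gw a z = gw (a + b) z \<or> exp (b * \<bar>z\<bar>) * gw a z = gw (a - b) z"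
      unfolding gw_def exp_add[symmetric] by (cases "z \<ge> 0") (auto simp: algebra_simps)
    then show "norm (exp (b * \<bar>z\<bar>) * gw a z) \<le> norm (gw (a + b) z + gw (a - b) z)"
      using gw_pos[of "a+b" z] gw_pos[of "a-b" z] by auto
  qed
qed

lemma pow_le_fact_exp: "\<bar>z::real\<bar>^k \<le> fact k * exp \<bar>z\<bar>"
proof -
  have s: "(\<lambda>n. \<bar>z\<bar>^n /\<^sub>R fact n) sums exp \<bar>z\<bar>" by (rule exp_converges)
  have "(\<Sum>n<Suc k. \<bar>z\<bar>^n /\<^sub>R fact n) \<le> exp \<bar>z\<bar>"
    using sum_le_suminf[OF sums_summable[OF s], of "{..<Suc k}"] sums_unique[OF s] by simp
  moreover have "\<bar>z\<bar>^k /\<^sub>R fact k \<le> (\<Sum>n<Suc k. \<bar>z\<bar>^n /\<^sub>R fact n)"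
    by (rule member_le_sum) auto
  ultimately have "\<bar>z\<bar>^k / fact k \<le> exp \<bar>z\<bar>" by (simp add: divide_inverse mult.commute)
  then show ?thesis by (simp add: field_simps)
qed


definition Zk :: "real set \<Rightarrow> nat \<Rightarrow> real \<Rightarrow> real" where
  "Zk S k m = (LINT z|lborel. z^k * gw m z * indicator S z)"

lemma gw_meas[measurable]: "(\<lambda>z. gw m z) \<in> borel_measurable borel"
  unfolding gw_def by measurable

lemma integrable_Zk:
  assumes S: "S \<in> sets lborel"
  shows "integrable lborel (\<lambda>z. z^k * gw m z * indicator S z)"
proof (rule Bochner_Integration.integrable_bound[OF integrable_mult_right[OF integrable_gw_exp_abs[of 1 m], of "fact k"]])
  show "(\<lambda>z. z^k * gw m z * indicator S z) \<in> borel_measurable lborel" using S by measurable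
  show "AE z in lborel. norm (z^k * gw m z * indicator S z) \<le> norm (fact k * (exp (1 * \<bar>z\<bar>) * gw m z))"
  proof (intro AE_I2)
    fix z :: real
    have "norm (z^k * gw m z * indicator S z) \<le> \<bar>z\<bar>^k * gw m z"
      using gw_pos[of m z] by (auto simp: indicator_def abs_mult power_abs)
    also have "\<dots> \<le> fact k * exp \<bar>z\<bar> * gw m z"
      using pow_le_fact_exp[of z k] gw_pos[of m z] by (intro mult_right_mono) auto
    finally show "norm (z^k * gw m z * indicator S z) \<le> norm (fact k * (exp (1 * \<bar>z\<bar>) * gw m z))"
      using gw_pos[of m z] by simp
  qed
qed

lemma exp_sub_one_bound: "\<bar>exp (x::real) - 1\<bar> \<le> \<bar>x\<bar> * exp \<bar>x\<bar>"
proof (cases "x \<ge> 0")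
  case True
  have "1 - x \<le> exp (-x)" using exp_ge_add_one_self[of "-x"] by simp
  then have "(1 - x) * exp x \<le> exp (-x) * exp x" by (intro mult_right_mono) auto
  then have "exp x - x * exp x \<le> 1" by (simp add: algebra_simps exp_minus_inverse)
  then show ?thesis using True by auto
next
  case False
  have a: "1 + x \<le> exp x" by (rule exp_ge_add_one_self)
  have b: "exp x \<le> 1" using False by simp
  have "\<bar>exp x - 1\<bar> = 1 - exp x" using b by simp
  also have "\<dots> \<le> \<bar>x\<bar>" using a False by linarith
  finally have "\<bar>exp x - 1\<bar> \<le> \<bar>x\<bar> * 1" by simp
  also have "\<dots> \<le> \<bar>x\<bar> * exp \<bar>x\<bar>" by (intro mult_left_mono) auto
  finally show ?thesis .
qed

lemma gw_shift: "gw (m + h) z = gw m z * exp (z * h)"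
  unfolding gw_def exp_add[symmetric] by (simp add: algebra_simps)

lemma Zk_deriv:
  assumes S: "S \<in> sets lborel"
  shows "(Zk S k has_real_derivative Zk S (Suc k) m) (at m)"
proof -
  define g where "g h z = z^k * gw m z * ((exp (z * h) - 1) / h) * indicator S z" for h z
  have eq: "(Zk S k (m + h) - Zk S k m) / h = (LINT z|lborel. g h z)" if "h \<noteq> 0" for h
  proof -
    have "(Zk S k (m + h) - Zk S k m) / h = (LINT z|lborel. (z^k * gw (m+h) z * indicator S z - z^k * gw m z * indicator S z) / h)"
      unfolding Zk_def using integrable_Zk[OF S] by simp
    also have "\<dots> = (LINT z|lborel. g h z)"
      unfolding g_def gw_shift by (rule Bochner_Integration.integral_cong) (auto simp: field_simps)
    finally show ?thesis .
  qed
  have lim: "((\<lambda>h. LINT z|lborel. g h z) \<longlongrightarrow> Zk S (Suc k) m) (at 0)"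
    unfolding tendsto_at_iff_sequentially
  proof (intro allI impI)
    fix X :: "nat \<Rightarrow> real"
    assume X0: "\<forall>i. X i \<in> UNIV - {0}" and X: "X \<longlonglongrightarrow> 0"
    obtain N where N: "\<And>n. n \<ge> N \<Longrightarrow> \<bar>X n\<bar> \<le> 1"
      using X unfolding LIMSEQ_def by (metis dist_real_def diff_zero less_eq_real_def zero_less_one)
    have "(\<lambda>n. LINT z|lborel. g (X (n + N)) z) \<longlonglongrightarrow> (LINT z|lborel. z^(Suc k) * gw m z * indicator S z)"
    proof (rule integral_dominated_convergence[where w="\<lambda>z. fact (Suc k) * (exp (2 * \<bar>z\<bar>) * gw m z)"])
      show "(\<lambda>z. z^(Suc k) * gw m z * indicator S z) \<in> borel_measurable lborel" using S by measurable
      show "g (X (n + N)) \<in> borel_measurable lborel" for n unfolding g_def using S by measurable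
      show "integrable lborel (\<lambda>z. fact (Suc k) * (exp (2 * \<bar>z\<bar>) * gw m z))"
        by (intro integrable_mult_right integrable_gw_exp_abs)
      show "AE z in lborel. (\<lambda>n. g (X (n + N)) z) \<longlonglongrightarrow> z^(Suc k) * gw m z * indicator S z"
      proof (intro AE_I2)
        fix z :: real
        have "((\<lambda>h. exp (z * h)) has_real_derivative z) (at 0)"
          by (auto intro!: derivative_eq_intros)
        then have d: "((\<lambda>h. (exp (z * h) - 1) / h) \<longlongrightarrow> z) (at 0)"
          unfolding DERIV_def by simp
        have Xa: "filterlim (\<lambda>n. X (n + N)) (at 0) sequentially"
          using X X0 by (intro filterlim_atI) (auto intro: LIMSEQ_ignore_initial_segment)
        have "(\<lambda>n. (exp (z * X (n + N)) - 1) / X (n + N)) \<longlonglongrightarrow> z"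
          using filterlim_compose[OF d Xa] by simp
        then have "(\<lambda>n. (z^k * gw m z * indicator S z) * ((exp (z * X (n + N)) - 1) / X (n + N)))
            \<longlonglongrightarrow> (z^k * gw m z * indicator S z) * z"
          by (rule tendsto_mult_left)
        moreover have e2: "g (X (n + N)) z = (z^k * gw m z * indicator S z) * ((exp (z * X (n + N)) - 1) / X (n + N))" for n
          unfolding g_def by (simp add: mult_ac)
        moreover have e3: "z^(Suc k) * gw m z * indicator S z = (z^k * gw m z * indicator S z) * z"
          by (simp add: mult_ac)
        ultimately show "(\<lambda>n. g (X (n + N)) z) \<longlonglongrightarrow> z^(Suc k) * gw m z * indicator S z"
          unfolding e2 e3 by (simp only:)
      qed
      show "AE z in lborel. norm (g (X (n + N)) z) \<le> fact (Suc k) * (exp (2 * \<bar>z\<bar>) * gw m z)" for n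
      proof (intro AE_I2)
        fix z :: real
        define h where "h = X (n + N)"
        have h1: "\<bar>h\<bar> \<le> 1" "h \<noteq> 0" using N[of "n+N"] X0 unfolding h_def by auto
        have "\<bar>(exp (z * h) - 1) / h\<bar> \<le> \<bar>z\<bar> * exp \<bar>z\<bar>"
        proof -
          have "\<bar>exp (z * h) - 1\<bar> \<le> \<bar>z * h\<bar> * exp \<bar>z * h\<bar>" by (rule exp_sub_one_bound)
          also have "\<dots> \<le> \<bar>z * h\<bar> * exp \<bar>z\<bar>"
            using h1 by (intro mult_left_mono) (auto simp: abs_mult mult_left_le)
          finally show ?thesis using h1 by (simp add: abs_mult divide_simps mult_ac)
        qed
        then have "\<bar>z\<bar>^k * gw m z * \<bar>(exp (z * h) - 1) / h\<bar> \<le> \<bar>z\<bar>^k * gw m z * (\<bar>z\<bar> * exp \<bar>z\<bar>)"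
          using gw_pos[of m z] by (intro mult_left_mono) auto
        moreover have "norm (g h z) = (\<bar>z\<bar>^k * gw m z * \<bar>(exp (z * h) - 1) / h\<bar>) * \<bar>indicator S z\<bar>"
          unfolding g_def real_norm_def abs_mult power_abs using gw_pos[of m z] by simp
        moreover have "\<bar>indicator S z\<bar> \<le> (1::real)" by (simp add: indicator_def)
        moreover have "0 \<le> \<bar>z\<bar>^k * gw m z * \<bar>(exp (z * h) - 1) / h\<bar>"
          using gw_pos[of m z] by simp
        ultimately have "norm (g h z) \<le> \<bar>z\<bar>^k * gw m z * (\<bar>z\<bar> * exp \<bar>z\<bar>)"
          by (metis (no_types, opaque_lifting) mult.right_neutral mult_left_mono order_trans abs_ge_zero)
        also have "\<dots> = (\<bar>z\<bar>^(Suc k) * exp \<bar>z\<bar>) * gw m z" by (simp add: algebra_simps)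
        also have "\<dots> \<le> (fact (Suc k) * exp \<bar>z\<bar> * exp \<bar>z\<bar>) * gw m z"
          using pow_le_fact_exp[of z "Suc k"] gw_pos[of m z] by (intro mult_right_mono) auto
        also have "\<dots> = fact (Suc k) * (exp (2 * \<bar>z\<bar>) * gw m z)"
          by (simp add: exp_add[symmetric] mult_ac)
        finally show "norm (g (X (n + N)) z) \<le> fact (Suc k) * (exp (2 * \<bar>z\<bar>) * gw m z)"
          unfolding h_def .
      qed
    qed
    then show "((\<lambda>h. LINT z|lborel. g h z) \<circ> X) \<longlonglongrightarrow> Zk S (Suc k) m"
      unfolding Zk_def comp_def by (rule LIMSEQ_offset)
  qed
  have "((\<lambda>h. (Zk S k (m + h) - Zk S k m) / h) \<longlongrightarrow> Zk S (Suc k) m) (at 0)"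
    using lim by (rule Lim_transform_eventually) (auto simp: eventually_at_filter eq)
  then show ?thesis unfolding DERIV_def .
qed


definition pm :: "real set \<Rightarrow> real \<Rightarrow> real" where
  "pm S m = (LINT z|lborel. normal_density m 1 z * indicator S z)"

lemma integrable_nd_ind:
  assumes S: "S \<in> sets lborel"
  shows "integrable lborel (\<lambda>z. normal_density m 1 z * indicator S z)"
  using S by (intro integrable_real_mult_indicator) auto

lemma surv_mass_eq:
  assumes S: "S \<in> sets lborel"
  shows "surv_mass S m = pm S m"
proof -
  have "surv_mass S m = integral\<^sup>L (density lborel (normal_density m 1)) (indicator S)"
    unfolding surv_mass_def by simp
  also have "\<dots> = (LINT z|lborel. normal_density m 1 z *\<^sub>R indicator S z)"
    using S by (intro integral_density) auto
  finally show ?thesis unfolding pm_def by simp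
qed

lemma Z0_eq: "Zk S 0 m = sqrt (2*pi) * exp (m\<^sup>2/2) * pm S m"
  unfolding Zk_def pm_def gw_normal by (simp add: mult.assoc)

lemma nd_sq_div: "normal_density \<mu> 1 z ^ 2 / normal_density m 1 z = exp ((\<mu> - m)\<^sup>2) * normal_density (2*\<mu> - m) 1 z"
proof -
  have e: "2 * (-(z - \<mu>)\<^sup>2 / 2) - (-(z - m)\<^sup>2 / 2) = (\<mu> - m)\<^sup>2 + (-(z - (2*\<mu> - m))\<^sup>2 / 2)"
    by (simp add: power2_eq_square divide_simps) (simp add: algebra_simps)
  have "exp (-(z - \<mu>)\<^sup>2 / 2) ^ 2 / exp (-(z - m)\<^sup>2 / 2) = exp ((\<mu> - m)\<^sup>2) * exp (-(z - (2*\<mu> - m))\<^sup>2 / 2)"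
  proof -
    have "exp (-(z - \<mu>)\<^sup>2 / 2) ^ 2 / exp (-(z - m)\<^sup>2 / 2) = exp (2 * (-(z - \<mu>)\<^sup>2 / 2) - (-(z - m)\<^sup>2 / 2))"
      unfolding exp_diff mult_2 exp_add power2_eq_square by simp
    also have "\<dots> = exp ((\<mu> - m)\<^sup>2) * exp (-(z - (2*\<mu> - m))\<^sup>2 / 2)"
      unfolding e exp_add by simp
    finally show ?thesis .
  qed
  then show ?thesis unfolding normal_density_def
    by (simp add: power_mult_distrib field_simps)
qed

lemma pm_lower:
  assumes S: "S \<in> sets lborel" and a: "pm S \<mu> \<ge> \<alpha>" "\<alpha> > 0"
  shows "pm S m \<ge> (3/4) * \<alpha>\<^sup>2 * exp (-(\<mu> - m)\<^sup>2)"
proof -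
  define E where "E = exp ((\<mu> - m)\<^sup>2)"
  define \<alpha>' where "\<alpha>' = pm S \<mu>"
  have E0: "E > 0" unfolding E_def by simp
  have a0: "\<alpha>' > 0" using a unfolding \<alpha>'_def by simp
  define l where "l = 2 * E / \<alpha>'"
  have l0: "l > 0" using E0 a0 unfolding l_def by simp
  have pw: "normal_density \<mu> 1 z * indicator S z \<le>
      (l * (normal_density m 1 z * indicator S z) + (E * normal_density (2*\<mu> - m) 1 z) / l) / 2" for z
  proof -
    define A where "A = normal_density m 1 z"
    define B where "B = normal_density \<mu> 1 z"
    have A0: "A > 0" "B > 0" unfolding A_def B_def by (auto intro: normal_density_pos)
    have q: "E * normal_density (2*\<mu> - m) 1 z = B^2 / A"
      unfolding A_def B_def E_def nd_sq_div by simp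
    have "0 \<le> (l * A - B)^2" by simp
    then have "2 * l * A * B \<le> l^2 * A^2 + B^2" by (simp add: power2_eq_square algebra_simps)
    then have "B \<le> (l * A + B^2 / A / l) / 2"
      using A0 l0 by (simp add: field_simps power2_eq_square)
    moreover have "0 \<le> B^2 / A / l" using A0 l0 by simp
    ultimately show ?thesis unfolding q A_def[symmetric] B_def[symmetric]
      by (cases "z \<in> S") (auto simp: indicator_def)
  qed
  have "\<alpha>' \<le> (LINT z|lborel. (l * (normal_density m 1 z * indicator S z) + (E * normal_density (2*\<mu> - m) 1 z) / l) / 2)"
    unfolding \<alpha>'_def pm_def
  proof (rule integral_mono)
    show "integrable lborel (\<lambda>z. normal_density \<mu> 1 z * indicator S z)" by (rule integrable_nd_ind[OF S])
    have i1: "integrable lborel (\<lambda>z. l * (normal_density m 1 z * indicator S z))"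
      by (intro integrable_mult_right integrable_nd_ind[OF S])
    have i2: "integrable lborel (\<lambda>z. E * normal_density (2*\<mu> - m) 1 z / l)"
      by simp
    show "integrable lborel (\<lambda>z. (l * (normal_density m 1 z * indicator S z) + (E * normal_density (2*\<mu> - m) 1 z) / l) / 2)"
      by (intro integrable_divide Bochner_Integration.integrable_add i1 i2)
  qed (rule pw)
  also have "\<dots> = (l * pm S m + E / l) / 2"
  proof -
    have i1: "integrable lborel (\<lambda>z. l * (normal_density m 1 z * indicator S z))"
      by (intro integrable_mult_right integrable_nd_ind[OF S])
    have i2: "integrable lborel (\<lambda>z. E * normal_density (2*\<mu> - m) 1 z / l)"
      by simp
    have "(LINT z|lborel. (l * (normal_density m 1 z * indicator S z) + (E * normal_density (2*\<mu> - m) 1 z) / l) / 2)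
      = ((LINT z|lborel. l * (normal_density m 1 z * indicator S z)) + (LINT z|lborel. E * normal_density (2*\<mu> - m) 1 z / l)) / 2"
      using i1 i2 by simp
    also have "(LINT z|lborel. l * (normal_density m 1 z * indicator S z)) = l * pm S m"
      unfolding pm_def by simp
    also have "(LINT z|lborel. E * normal_density (2*\<mu> - m) 1 z / l) = E / l"
      by simp
    finally show ?thesis .
  qed
  also have "\<dots> = E * pm S m / \<alpha>' + \<alpha>' / 4"
    unfolding l_def using E0 a0 by (simp add: field_simps)
  finally have "(3/4) * \<alpha>'^2 \<le> E * pm S m" using a0 by (simp add: field_simps power2_eq_square)
  moreover have "\<alpha>^2 \<le> \<alpha>'^2" using a unfolding \<alpha>'_def by (intro power_mono) auto
  ultimately have "(3/4) * \<alpha>^2 \<le> E * pm S m" by linarith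
  then have "(3/4) * \<alpha>^2 / E \<le> pm S m" using E0 by (simp add: pos_divide_le_eq mult_ac)
  moreover have "exp (-(\<mu> - m)\<^sup>2) = 1 / E" unfolding E_def by (simp add: exp_minus divide_inverse)
  ultimately show ?thesis by simp
qed


lemma gw_le: "gw m z \<le> exp (m\<^sup>2/2)"
proof -
  have "-(1/2) * z\<^sup>2 + z * m \<le> m\<^sup>2/2"
    using zero_le_power2[of "z - m"] by (simp add: power2_eq_square algebra_simps)
  then show ?thesis unfolding gw_def by simp
qed

lemma var_lower:
  assumes S: "S \<in> sets lborel" and Z0: "Zk S 0 m > 0"
  shows "Zk S 2 m * Zk S 0 m - (Zk S 1 m)\<^sup>2 \<ge> (Zk S 0 m)^4 * exp (-m\<^sup>2) / 32"
proof -
  define Z0 Z1 Z2 where "Z0 = Zk S 0 m" and "Z1 = Zk S 1 m" and "Z2 = Zk S 2 m"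
  define \<nu> where "\<nu> = Z1 / Z0"
  define M where "M = exp (m\<^sup>2/2)"
  define r where "r = Z0 * exp (-m\<^sup>2/2) / 4"
  have Z0p: "Z0 > 0" using Z0 unfolding Z0_def .
  have r0: "r > 0" unfolding r_def using Z0p by simp
  have rM: "r * M = Z0 / 4" unfolding r_def M_def by (simp add: exp_minus field_simps)
  have pw: "r\<^sup>2 * (gw m z * indicator S z - M * indicator {\<nu>-r..\<nu>+r} z) \<le> (z - \<nu>)\<^sup>2 * (gw m z * indicator S z)" for z
  proof (cases "\<bar>z - \<nu>\<bar> \<le> r")
    case True
    then have "z \<in> {\<nu>-r..\<nu>+r}" by auto
    then have "gw m z * indicator S z - M * indicator {\<nu>-r..\<nu>+r} z \<le> 0"
      using gw_le[of m z] gw_pos[of m z] unfolding M_def by (auto simp: indicator_def)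
    then have "r\<^sup>2 * (gw m z * indicator S z - M * indicator {\<nu>-r..\<nu>+r} z) \<le> 0"
      by (simp add: mult_nonneg_nonpos)
    also have "0 \<le> (z - \<nu>)\<^sup>2 * (gw m z * indicator S z)" using gw_pos[of m z] by simp
    finally show ?thesis .
  next
    case False
    then have "r\<^sup>2 \<le> (z - \<nu>)\<^sup>2" using r0
      by (metis abs_ge_zero less_eq_real_def not_le power2_abs power_mono)
    moreover have "0 \<le> gw m z * indicator S z" using gw_pos[of m z] by simp
    moreover have "0 \<le> M * indicator {\<nu>-r..\<nu>+r} z" unfolding M_def by simp
    ultimately have "r\<^sup>2 * (gw m z * indicator S z - M * indicator {\<nu>-r..\<nu>+r} z) \<le> r\<^sup>2 * (gw m z * indicator S z)"
      by (simp add: mult_left_mono)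
    also have "\<dots> \<le> (z - \<nu>)\<^sup>2 * (gw m z * indicator S z)"
      using \<open>r\<^sup>2 \<le> (z - \<nu>)\<^sup>2\<close> gw_pos[of m z] by (intro mult_right_mono) auto
    finally show ?thesis .
  qed
  have i0: "integrable lborel (\<lambda>z. z^0 * gw m z * indicator S z)"
    and i1: "integrable lborel (\<lambda>z. z^1 * gw m z * indicator S z)"
    and i2: "integrable lborel (\<lambda>z. z^2 * gw m z * indicator S z)"
    using integrable_Zk[OF S] by blast+
  have iI: "integrable lborel (indicator {\<nu>-r..\<nu>+r} :: real \<Rightarrow> real)" using emeasure_lborel_cbox_finite[of "\<nu>-r" "\<nu>+r"] by (intro integrable_real_indicator) auto
  have eqL: "(z - \<nu>)\<^sup>2 * (gw m z * indicator S z) =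
      z^2 * gw m z * indicator S z - 2 * \<nu> * (z^1 * gw m z * indicator S z) + \<nu>\<^sup>2 * (z^0 * gw m z * indicator S z)" for z
    by (simp add: power2_eq_square algebra_simps)
  have IL: "(LINT z|lborel. (z - \<nu>)\<^sup>2 * (gw m z * indicator S z)) = Z2 - 2 * \<nu> * Z1 + \<nu>\<^sup>2 * Z0"
    unfolding eqL Z0_def Z1_def Z2_def Zk_def using i0 i1 i2 by simp
  have IR: "(LINT z|lborel. r\<^sup>2 * (gw m z * indicator S z - M * indicator {\<nu>-r..\<nu>+r} z)) = r\<^sup>2 * (Z0 - M * (2 * r))"
  proof -
    have "(LINT z|lborel. r\<^sup>2 * (gw m z * indicator S z - M * indicator {\<nu>-r..\<nu>+r} z))
       = r\<^sup>2 * ((LINT z|lborel. z^0 * gw m z * indicator S z) - M * (LINT z|lborel. indicator {\<nu>-r..\<nu>+r} z))"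
      using i0 iI by simp
    also have "(LINT z|lborel. indicator {\<nu>-r..\<nu>+r} z :: real) = 2 * r"
      using r0 by simp
    finally show ?thesis unfolding Z0_def Zk_def by simp
  qed
  have calc: "r\<^sup>2 * (Z0 - M * (2 * r)) \<le> Z2 - 2 * \<nu> * Z1 + \<nu>\<^sup>2 * Z0"
    unfolding IL[symmetric] IR[symmetric]
  proof (rule integral_mono[OF _ _ pw])
    show "integrable lborel (\<lambda>z. r\<^sup>2 * (gw m z * indicator S z - M * indicator {\<nu>-r..\<nu>+r} z))"
      using i0 iI by simp
    show "integrable lborel (\<lambda>z. (z - \<nu>)\<^sup>2 * (gw m z * indicator S z))"
      unfolding eqL using i0 i1 i2 by simp
  qed
  have e1: "Z0 - M * (2 * r) = Z0 / 2" using rM by (simp add: algebra_simps)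
  have e2: "Z2 - 2 * \<nu> * Z1 + \<nu>\<^sup>2 * Z0 = Z2 - Z1\<^sup>2 / Z0"
    unfolding \<nu>_def using Z0p by (simp add: field_simps power2_eq_square)
  have "r\<^sup>2 * (Z0 / 2) \<le> Z2 - Z1\<^sup>2 / Z0" using calc unfolding e1 e2 .
  then have "r\<^sup>2 * (Z0 / 2) * Z0 \<le> (Z2 - Z1\<^sup>2 / Z0) * Z0" using Z0p by (intro mult_right_mono) auto
  also have "\<dots> = Z2 * Z0 - Z1\<^sup>2" using Z0p by (simp add: field_simps)
  finally have *: "r\<^sup>2 * (Z0 / 2) * Z0 \<le> Z2 * Z0 - Z1\<^sup>2" .
  have "r\<^sup>2 * (Z0 / 2) * Z0 = Z0^4 * (exp (-m\<^sup>2/2))\<^sup>2 / 32" unfolding r_def by (simp add: field_simps power2_eq_square power4_eq_xxxx)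
  also have "(exp (-m\<^sup>2/2))\<^sup>2 = exp (-m\<^sup>2)" by (simp add: power2_eq_square exp_add[symmetric])
  finally have eqf: "r\<^sup>2 * (Z0 / 2) * Z0 = Z0^4 * exp (-m\<^sup>2) / 32" .
  show ?thesis unfolding Z0_def[symmetric] Z1_def[symmetric] Z2_def[symmetric] using * eqf by linarith
qed


definition Vf :: "real set \<Rightarrow> real \<Rightarrow> real" where
  "Vf S m = (Zk S 2 m * Zk S 0 m - (Zk S 1 m)\<^sup>2) / (Zk S 0 m)\<^sup>2"

lemma V_bound:
  assumes S: "S \<in> sets lborel" and p: "pm S \<mu> \<ge> \<alpha>" and a: "\<alpha> > 0" and mu: "\<bar>m - \<mu>\<bar> \<le> 4"
  shows "Vf S m \<ge> exp (-32) / 10 * \<alpha>^4"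
proof -
  define P where "P = pm S m"
  have PL: "P \<ge> (3/4) * \<alpha>\<^sup>2 * exp (-(\<mu> - m)\<^sup>2)" unfolding P_def by (rule pm_lower[OF S p a])
  have "\<bar>\<mu> - m\<bar> \<le> \<bar>4\<bar>" using mu by (simp add: abs_minus_commute)
  then have "(\<mu> - m)\<^sup>2 \<le> 4\<^sup>2" by (simp only: abs_le_square_iff)
  then have "exp (-16) \<le> exp (-(\<mu> - m)\<^sup>2)" by simp
  then have P1: "P \<ge> (3/4) * \<alpha>\<^sup>2 * exp (-16)"
    using order_trans[OF mult_left_mono[OF \<open>exp (-16) \<le> exp (-(\<mu> - m)\<^sup>2)\<close>, of "(3/4) * \<alpha>\<^sup>2"] PL] by simp
  have P0: "(3/4) * \<alpha>\<^sup>2 * exp (-16) > 0" using a by simp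
  have Z0e: "Zk S 0 m = sqrt (2*pi) * exp (m\<^sup>2/2) * P" unfolding P_def by (rule Z0_eq)
  have Z0p: "Zk S 0 m > 0" unfolding Z0e using P1 P0 by simp
  have vl: "Zk S 2 m * Zk S 0 m - (Zk S 1 m)\<^sup>2 \<ge> (Zk S 0 m)^4 * exp (-m\<^sup>2) / 32"
    by (rule var_lower[OF S Z0p])
  have "Vf S m \<ge> (Zk S 0 m)^4 * exp (-m\<^sup>2) / 32 / (Zk S 0 m)\<^sup>2"
    unfolding Vf_def using vl Z0p by (intro divide_right_mono) auto
  also have "(Zk S 0 m)^4 * exp (-m\<^sup>2) / 32 / (Zk S 0 m)\<^sup>2 = (Zk S 0 m)\<^sup>2 * exp (-m\<^sup>2) / 32"
    using Z0p by (simp add: power2_eq_square power4_eq_xxxx)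
  also have "(Zk S 0 m)\<^sup>2 = 2 * pi * exp (m\<^sup>2) * P\<^sup>2"
  proof -
    have e1: "(sqrt (2*pi))\<^sup>2 = 2 * pi" by simp
    have e2: "(exp (m\<^sup>2/2))\<^sup>2 = exp (m\<^sup>2)" unfolding power2_eq_square[of "exp _"] exp_add[symmetric] by simp
    show ?thesis unfolding Z0e power_mult_distrib e1 e2 ..
  qed
  also have "2 * pi * exp (m\<^sup>2) * P\<^sup>2 * exp (-m\<^sup>2) / 32 = pi * P\<^sup>2 / 16"
    by (simp add: exp_minus field_simps)
  finally have V1: "Vf S m \<ge> pi * P\<^sup>2 / 16" .
  have "P\<^sup>2 \<ge> ((3/4) * \<alpha>\<^sup>2 * exp (-16))\<^sup>2" using P1 P0 by (intro power_mono) auto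
  also have "((3/4) * \<alpha>\<^sup>2 * exp (-16))\<^sup>2 = (9/16) * \<alpha>^4 * exp (-32)"
    by (simp add: power_mult_distrib power2_eq_square power4_eq_xxxx exp_add[symmetric])
  finally have P2: "P\<^sup>2 \<ge> (9/16) * \<alpha>^4 * exp (-32)" .
  have "exp (-32) / 10 * \<alpha>^4 \<le> 3 * ((9/16) * \<alpha>^4 * exp (-32)) / 16"
    using a by simp
  also have "\<dots> \<le> pi * ((9/16) * \<alpha>^4 * exp (-32)) / 16"
    using pi_gt3 a by (intro divide_right_mono mult_right_mono) auto
  also have "\<dots> \<le> pi * P\<^sup>2 / 16"
    using P2 pi_gt_zero by (intro divide_right_mono mult_left_mono) auto
  finally show ?thesis using V1 by linarith
qed

lemma lnZ_deriv:
  assumes S: "S \<in> sets lborel" and pos: "\<And>m. Zk S 0 m > 0"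
  shows "((\<lambda>m. ln (Zk S 0 m)) has_real_derivative Zk S 1 m / Zk S 0 m) (at m)"
proof -
  have "((\<lambda>m. ln (Zk S 0 m)) has_real_derivative inverse (Zk S 0 m) * Zk S 1 m) (at m)"
    using DERIV_chain2[OF DERIV_ln[OF pos] Zk_deriv[OF S, of 0 m]] by simp
  then show ?thesis by (simp add: field_simps)
qed

lemma ratio_deriv:
  assumes S: "S \<in> sets lborel" and pos: "\<And>m. Zk S 0 m > 0"
  shows "((\<lambda>m. Zk S 1 m / Zk S 0 m) has_real_derivative Vf S m) (at m)"
proof -
  have "((\<lambda>m. Zk S 1 m / Zk S 0 m) has_real_derivative
      (Zk S 2 m * Zk S 0 m - Zk S 1 m * Zk S 1 m) / (Zk S 0 m * Zk S 0 m)) (at m)"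
    using DERIV_divide[OF Zk_deriv[OF S, of 1 m] Zk_deriv[OF S, of 0 m]] pos[of m]
    by (simp add: numeral_2_eq_2)
  then show ?thesis unfolding Vf_def by (simp add: power2_eq_square)
qed


lemma b_bound:
  fixes \<Delta> :: "nat \<Rightarrow> real"
  assumes K: "K = {j. j < d \<and> \<Omega>s j \<noteq> 0}" and C: "C > 0" and A4: "\<forall>j<d. \<bar>X i j\<bar> \<le> C"
    and c1: "l2norm d \<Delta> \<le> 1 / (C * sqrt (real (card K)))"
    and c2: "l1norm_on ({..<d} - K) \<Delta> \<le> 3 * l1norm_on K \<Delta>"
  shows "\<bar>row_dot d X i \<Delta>\<bar> \<le> 4"
proof -
  have Kd: "K \<subseteq> {..<d}" using K by auto
  have Kf: "finite K" using Kd finite_subset by blast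
  have l1K0: "0 \<le> l1norm_on K \<Delta>" unfolding l1norm_on_def by (intro sum_nonneg) simp
  have s1: "\<bar>row_dot d X i \<Delta>\<bar> \<le> (\<Sum>j<d. \<bar>X i j * \<Delta> j\<bar>)" unfolding row_dot_def by (rule sum_abs)
  have s2: "(\<Sum>j<d. \<bar>X i j * \<Delta> j\<bar>) \<le> (\<Sum>j<d. C * \<bar>\<Delta> j\<bar>)"
  proof (rule sum_mono)
    fix j assume "j \<in> {..<d}"
    then have "\<bar>X i j\<bar> \<le> C" using A4 by simp
    then have "\<bar>X i j\<bar> * \<bar>\<Delta> j\<bar> \<le> C * \<bar>\<Delta> j\<bar>" by (rule mult_right_mono) simp
    then show "\<bar>X i j * \<Delta> j\<bar> \<le> C * \<bar>\<Delta> j\<bar>" by (simp only: abs_mult)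
  qed
  have s3: "(\<Sum>j<d. C * \<bar>\<Delta> j\<bar>) = C * (\<Sum>j<d. \<bar>\<Delta> j\<bar>)" by (rule sum_distrib_left[symmetric])
  have s4: "(\<Sum>j<d. \<bar>\<Delta> j\<bar>) = l1norm_on ({..<d} - K) \<Delta> + l1norm_on K \<Delta>"
    unfolding l1norm_on_def by (rule sum.subset_diff[OF Kd finite_lessThan])
  have s5: "(\<Sum>j<d. \<bar>\<Delta> j\<bar>) \<le> 4 * l1norm_on K \<Delta>" using s4 c2 by linarith
  have s6: "C * (\<Sum>j<d. \<bar>\<Delta> j\<bar>) \<le> C * (4 * l1norm_on K \<Delta>)"
    using s5 C by (intro mult_left_mono) auto
  have b1: "\<bar>row_dot d X i \<Delta>\<bar> \<le> C * (4 * l1norm_on K \<Delta>)"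
    using s1 s2 s3 s6 by linarith
  have "l1norm_on K \<Delta> \<le> 1 / C"
  proof (cases "card K = 0")
    case True
    then have "K = {}" using Kf by simp
    then show ?thesis using C by (simp add: l1norm_on_def)
  next
    case False
    then have k0: "real (card K) > 0" by simp
    have l20: "0 \<le> l2norm d \<Delta>" unfolding l2norm_def by (intro real_sqrt_ge_zero sum_nonneg) simp
    have sq: "(l2norm d \<Delta>)\<^sup>2 = (\<Sum>j<d. (\<Delta> j)\<^sup>2)"
      unfolding l2norm_def by (rule real_sqrt_pow2) (intro sum_nonneg, simp)
    have t1: "(l1norm_on K \<Delta>)\<^sup>2 \<le> (\<Sum>j\<in>K. (\<bar>\<Delta> j\<bar>)\<^sup>2) * card K"
      unfolding l1norm_on_def by (rule sum_squared_le_sum_of_squares)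
    have t2: "(\<Sum>j\<in>K. (\<bar>\<Delta> j\<bar>)\<^sup>2) \<le> (\<Sum>j<d. (\<Delta> j)\<^sup>2)"
    proof -
      have "(\<Sum>j\<in>K. (\<bar>\<Delta> j\<bar>)\<^sup>2) = (\<Sum>j\<in>K. (\<Delta> j)\<^sup>2)" by simp
      also have "\<dots> \<le> (\<Sum>j<d. (\<Delta> j)\<^sup>2)" by (rule sum_mono2[OF finite_lessThan Kd]) simp
      finally show ?thesis .
    qed
    have t3: "(\<Sum>j\<in>K. (\<bar>\<Delta> j\<bar>)\<^sup>2) * card K \<le> (l2norm d \<Delta>)\<^sup>2 * card K"
      unfolding sq using t2 by (rule mult_right_mono) simp
    have t4: "(l2norm d \<Delta>)\<^sup>2 \<le> (1 / (C * sqrt (real (card K))))\<^sup>2"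
      by (rule power_mono[OF c1 l20])
    have t5: "(l2norm d \<Delta>)\<^sup>2 * card K \<le> (1 / (C * sqrt (real (card K))))\<^sup>2 * card K"
      using t4 by (rule mult_right_mono) simp
    have t6: "(1 / (C * sqrt (real (card K))))\<^sup>2 * card K = (1 / C)\<^sup>2"
    proof -
      have "(1 / (C * sqrt (real (card K))))\<^sup>2 = 1 / (C\<^sup>2 * real (card K))"
        using k0 by (simp add: power_divide power_mult_distrib)
      then show ?thesis using k0 C by (simp add: power_divide)
    qed
    have "(l1norm_on K \<Delta>)\<^sup>2 \<le> (1 / C)\<^sup>2" using t1 t3 t5 t6 by linarith
    moreover have "0 \<le> 1 / C" using C by simp
    ultimately show ?thesis by (rule power2_le_imp_le)
  qed
  then have "4 * l1norm_on K \<Delta> \<le> 4 * (1 / C)" by linarith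
  then have "C * (4 * l1norm_on K \<Delta>) \<le> C * (4 * (1 / C))" using C by (simp only: mult_le_cancel_left_pos)
  also have "\<dots> = 4" using C by simp
  finally show ?thesis using b1 by linarith
qed


lemma lnZ_chain:
  assumes S: "S \<in> sets lborel" and pos: "\<And>m. Zk S 0 m > 0"
    and g: "(g has_real_derivative g') (at t)" and E: "E = Zk S 1 (g t) / Zk S 0 (g t) * g'"
  shows "((\<lambda>t. ln (Zk S 0 (g t))) has_real_derivative E) (at t)"
  unfolding E by (rule DERIV_chain2[OF lnZ_deriv[OF S pos] g])

lemma ratio_chain:
  assumes S: "S \<in> sets lborel" and pos: "\<And>m. Zk S 0 m > 0"
    and g: "(g has_real_derivative g') (at t)" and E: "E = Vf S (g t) * g'"
  shows "((\<lambda>t. Zk S 1 (g t) / Zk S 0 (g t)) has_real_derivative E) (at t)"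
  unfolding E by (rule DERIV_chain2[OF ratio_deriv[OF S pos] g])

lemma hess_formula:
  assumes S: "S \<in> sets lborel" and pos: "\<And>m. Zk S 0 m > 0"
  shows "hess_quad (trunc_loss S n d X y) \<Omega> \<Delta> =
    (1 / real n) * (\<Sum>i<n. Vf S (row_dot d X i \<Omega>) * (row_dot d X i \<Delta>)\<^sup>2)"
proof -
  define a where "a i = row_dot d X i \<Omega>" for i
  define b where "b i = row_dot d X i \<Delta>" for i
  have rd: "row_dot d X i (\<lambda>j. \<Omega> j + t * \<Delta> j) = a i + t * b i" for i t
    unfolding a_def b_def row_dot_def by (simp add: algebra_simps sum.distrib sum_distrib_left)
  have lint: "(LINT z|lborel. exp (-(1/2) * z\<^sup>2 + z * m) * indicator S z) = Zk S 0 m" for m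
    unfolding Zk_def gw_def by simp
  define F where "F t = (1 / real n) * (\<Sum>i<n. (1/2) * (y i)\<^sup>2 - y i * (a i + t * b i) + ln (Zk S 0 (a i + t * b i)))" for t
  define R where "R m = Zk S 1 m / Zk S 0 m" for m
  have Rc: "((\<lambda>t. R (g t)) has_real_derivative E) (at t)"
    if "(g has_real_derivative g') (at t)" "E = Vf S (g t) * g'" for g g' t E
    unfolding R_def by (rule ratio_chain[OF S pos that])
  define F1 where "F1 t = (1 / real n) * (\<Sum>i<n. - (y i * b i) + R (a i + t * b i) * b i)" for t
  define F2 where "F2 t = (1 / real n) * (\<Sum>i<n. Vf S (a i + t * b i) * b i * b i)" for t
  have Feq: "(\<lambda>t. trunc_loss S n d X y (\<lambda>j. \<Omega> j + t * \<Delta> j)) = F"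
    unfolding trunc_loss_def rd lint F_def by simp
  have d1: "(F has_real_derivative F1 t) (at t)" for t
    unfolding F_def F1_def
    by (intro DERIV_cmult DERIV_sum) (auto intro!: derivative_eq_intros lnZ_chain[OF S pos] simp: R_def)
  have d2: "(F1 has_real_derivative F2 t) (at t)" for t
    unfolding F1_def F2_def
    by (intro DERIV_cmult DERIV_sum) (auto intro!: derivative_eq_intros Rc)
  have "deriv F = F1" using d1 by (intro ext DERIV_imp_deriv)
  then have "hess_quad (trunc_loss S n d X y) \<Omega> \<Delta> = deriv F1 0"
    unfolding hess_quad_def Feq by simp
  also have "\<dots> = F2 0" using d2 by (rule DERIV_imp_deriv)
  finally show ?thesis unfolding F2_def a_def b_def by (simp add: power2_eq_square mult.assoc)
qed


lemma row_dot_diff: "row_dot d X i (\<lambda>j. f j - g j) = row_dot d X i f - row_dot d X i g"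
  unfolding row_dot_def by (simp add: right_diff_distrib sum_subtractf)

lemma core2:
  fixes S :: "real set" and n d :: nat and X :: "nat \<Rightarrow> nat \<Rightarrow> real" and y \<Omega>s \<Omega> \<Delta> :: "nat \<Rightarrow> real"
    and K :: "nat set" and \<alpha> \<beta> C :: real
  assumes S: "S \<in> sets lborel" and n: "n > 0" and K: "K = {j. j < d \<and> \<Omega>s j \<noteq> 0}"
    and a: "\<alpha> > 0" and A1: "\<forall>i<n. surv_mass S (row_dot d X i \<Omega>s) \<ge> \<alpha>"
    and C: "C > 0" and A4: "\<forall>i<n. \<forall>j<d. \<bar>X i j\<bar> \<le> C" and b: "\<beta> > 0" and RE: "RE_cond n d X K \<beta>"
    and \<Delta>_def: "\<Delta> = (\<lambda>j. \<Omega> j - \<Omega>s j)"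
    and c1: "l2norm d \<Delta> \<le> 1 / (C * sqrt (real (card K)))"
    and c2: "l1norm_on ({..<d} - K) \<Delta> \<le> 3 * l1norm_on K \<Delta>"
  shows "hess_quad (trunc_loss S n d X y) \<Omega> \<Delta> \<ge> exp (-32) / 10 * \<alpha>^4 * \<beta> * (l2norm d \<Delta>)\<^sup>2"
proof -
  have pA: "pm S (row_dot d X i \<Omega>s) \<ge> \<alpha>" if "i < n" for i
    using A1 that surv_mass_eq[OF S] by auto
  have pos: "Zk S 0 m > 0" for m
  proof -
    have "pm S m \<ge> (3/4) * \<alpha>\<^sup>2 * exp (-(row_dot d X 0 \<Omega>s - m)\<^sup>2)"
      by (rule pm_lower[OF S pA[OF n] a])
    moreover have "(3/4) * \<alpha>\<^sup>2 * exp (-(row_dot d X 0 \<Omega>s - m)\<^sup>2) > 0" using a by simp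
    ultimately show ?thesis unfolding Z0_eq by simp
  qed
  define c where "c = exp (-32) / 10 * \<alpha>^4"
  have c0: "c \<ge> 0" unfolding c_def by simp
    have V: "Vf S (row_dot d X i \<Omega>) \<ge> c" if i: "i < n" for i
    proof -
      have bb: "\<bar>row_dot d X i \<Delta>\<bar> \<le> 4"
        by (rule b_bound[OF K C _ c1 c2]) (use A4 i in auto)
      have "row_dot d X i \<Omega> - row_dot d X i \<Omega>s = row_dot d X i \<Delta>"
        unfolding \<Delta>_def by (rule row_dot_diff[symmetric])
      then have "\<bar>row_dot d X i \<Omega> - row_dot d X i \<Omega>s\<bar> \<le> 4" using bb by simp
      then show ?thesis unfolding c_def by (rule V_bound[OF S pA[OF i] a])
    qed
    have "(\<Sum>i<n. c * (row_dot d X i \<Delta>)\<^sup>2) \<le> (\<Sum>i<n. Vf S (row_dot d X i \<Omega>) * (row_dot d X i \<Delta>)\<^sup>2)"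
      using V by (intro sum_mono mult_right_mono) auto
    then have H1: "(1 / real n) * (\<Sum>i<n. c * (row_dot d X i \<Delta>)\<^sup>2) \<le> hess_quad (trunc_loss S n d X y) \<Omega> \<Delta>"
      unfolding hess_formula[OF S pos] by (intro mult_left_mono) auto
    have H2: "(1 / real n) * (\<Sum>i<n. c * (row_dot d X i \<Delta>)\<^sup>2) = c * ((1 / real n) * (\<Sum>i<n. (row_dot d X i \<Delta>)\<^sup>2))"
      by (simp add: sum_distrib_left)
    have "\<forall>\<Delta>'. l1norm_on ({..<d} - K) \<Delta>' \<le> 3 * l1norm_on K \<Delta>' \<longrightarrow>
        (1 / real n) * (\<Sum>i<n. (row_dot d X i \<Delta>')\<^sup>2) \<ge> \<beta> * (l2norm d \<Delta>')\<^sup>2"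
      using RE unfolding RE_cond_def .
    from this[rule_format, OF c2]
    have R: "\<beta> * (l2norm d \<Delta>)\<^sup>2 \<le> (1 / real n) * (\<Sum>i<n. (row_dot d X i \<Delta>)\<^sup>2)" .
    have "c * (\<beta> * (l2norm d \<Delta>)\<^sup>2) \<le> c * ((1 / real n) * (\<Sum>i<n. (row_dot d X i \<Delta>)\<^sup>2))"
      by (rule mult_left_mono[OF R c0])
    also have "\<dots> = (1 / real n) * (\<Sum>i<n. c * (row_dot d X i \<Delta>)\<^sup>2)" by (rule H2[symmetric])
    also have "\<dots> \<le> hess_quad (trunc_loss S n d X y) \<Omega> \<Delta>" by (rule H1)
    finally have "c * (\<beta> * (l2norm d \<Delta>)\<^sup>2) \<le> hess_quad (trunc_loss S n d X y) \<Omega> \<Delta>" .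
    moreover have "c * (\<beta> * (l2norm d \<Delta>)\<^sup>2) = exp (-32) / 10 * \<alpha>^4 * \<beta> * (l2norm d \<Delta>)\<^sup>2"
      unfolding c_def by (simp only: mult.assoc)
    ultimately show "hess_quad (trunc_loss S n d X y) \<Omega> \<Delta> \<ge> exp (-32) / 10 * \<alpha>^4 * \<beta> * (l2norm d \<Delta>)\<^sup>2"
      by simp
  qed

lemma core3:
  fixes S :: "real set" and n d :: nat and X :: "nat \<Rightarrow> nat \<Rightarrow> real" and y \<Omega>s \<Omega> :: "nat \<Rightarrow> real"
    and K :: "nat set" and \<alpha> \<beta> C :: real
  assumes H: "S \<in> sets lborel \<and> n > 0 \<and> K = {j. j < d \<and> \<Omega>s j \<noteq> 0} \<and>
     \<alpha> > 0 \<and> (\<forall>i<n. surv_mass S (row_dot d X i \<Omega>s) \<ge> \<alpha>) \<and>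
     C > 0 \<and> (\<forall>i<n. \<forall>j<d. \<bar>X i j\<bar> \<le> C) \<and>
     \<beta> > 0 \<and> RE_cond n d X K \<beta>"
  shows "l2norm d (\<lambda>j. \<Omega> j - \<Omega>s j) \<le> 1 / (C * sqrt (real (card K))) \<and>
    l1norm_on ({..<d} - K) (\<lambda>j. \<Omega> j - \<Omega>s j) \<le> 3 * l1norm_on K (\<lambda>j. \<Omega> j - \<Omega>s j) \<longrightarrow>
    hess_quad (trunc_loss S n d X y) \<Omega> (\<lambda>j. \<Omega> j - \<Omega>s j) \<ge> exp (-32) / 10 * \<alpha>^4 * \<beta> * (l2norm d (\<lambda>j. \<Omega> j - \<Omega>s j))\<^sup>2"
proof (intro impI)
  assume c: "l2norm d (\<lambda>j. \<Omega> j - \<Omega>s j) \<le> 1 / (C * sqrt (real (card K))) \<and>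
    l1norm_on ({..<d} - K) (\<lambda>j. \<Omega> j - \<Omega>s j) \<le> 3 * l1norm_on K (\<lambda>j. \<Omega> j - \<Omega>s j)"
  from c have c1: "l2norm d (\<lambda>j. \<Omega> j - \<Omega>s j) \<le> 1 / (C * sqrt (real (card K)))" by (rule conjunct1)
  from c have c2: "l1norm_on ({..<d} - K) (\<lambda>j. \<Omega> j - \<Omega>s j) \<le> 3 * l1norm_on K (\<lambda>j. \<Omega> j - \<Omega>s j)" by (rule conjunct2)
  from H have S: "S \<in> sets lborel" and n: "n > 0" and K: "K = {j. j < d \<and> \<Omega>s j \<noteq> 0}"
    and a: "\<alpha> > 0" and A1: "\<forall>i<n. surv_mass S (row_dot d X i \<Omega>s) \<ge> \<alpha>"
    and C: "C > 0" and A4: "\<forall>i<n. \<forall>j<d. \<bar>X i j\<bar> \<le> C" and b: "\<beta> > 0" and RE: "RE_cond n d X K \<beta>"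
    by auto
  show "hess_quad (trunc_loss S n d X y) \<Omega> (\<lambda>j. \<Omega> j - \<Omega>s j) \<ge> exp (-32) / 10 * \<alpha>^4 * \<beta> * (l2norm d (\<lambda>j. \<Omega> j - \<Omega>s j))\<^sup>2"
    by (rule core2[OF S n K a A1 C A4 b RE refl c1 c2])
qed

theorem lemma17:
  shows "\<exists>c>0. \<forall>(S::real set) (n::nat) (d::nat) (X::nat \<Rightarrow> nat \<Rightarrow> real) (y::nat \<Rightarrow> real)
      (\<Omega>s::nat \<Rightarrow> real) (K::nat set) (\<alpha>::real) (\<beta>::real) (C::real).
     S \<in> sets lborel \<and> n > 0 \<and> K = {j. j < d \<and> \<Omega>s j \<noteq> 0} \<and>
     \<alpha> > 0 \<and> (\<forall>i<n. surv_mass S (row_dot d X i \<Omega>s) \<ge> \<alpha>) \<and>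
     C > 0 \<and> (\<forall>i<n. \<forall>j<d. \<bar>X i j\<bar> \<le> C) \<and>
     \<beta> > 0 \<and> RE_cond n d X K \<beta>
     \<longrightarrow> (\<exists>\<kappa> \<ge> c * \<alpha>^4 * \<beta>. \<forall>\<Omega>::nat \<Rightarrow> real.
            let \<Delta> = (\<lambda>j. \<Omega> j - \<Omega>s j) in
            l2norm d \<Delta> \<le> 1 / (C * sqrt (real (card K))) \<and>
            l1norm_on ({..<d} - K) \<Delta> \<le> 3 * l1norm_on K \<Delta>
            \<longrightarrow> hess_quad (trunc_loss S n d X y) \<Omega> \<Delta> \<ge> \<kappa> * (l2norm d \<Delta>)\<^sup>2)"
  apply (rule exI[of _ "exp (-32) / 10"])
  apply (intro conjI allI impI)
   apply simp
  subgoal for S n d X y \<Omega>s K \<alpha> \<beta> C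
    apply (rule exI[of _ "exp (-32) / 10 * \<alpha>^4 * \<beta>"])
    apply (intro conjI allI)
     apply simp
    subgoal for \<Omega>
      unfolding Let_def
      by (rule core3)
    done
  done

end
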